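(* Let $(X,d)$ be a pointed metric space and let $((x_i,y_i))_{i\in I}$ be a Lipschitz interpolating family in $\widetilde X$ for $\mathrm{Lip}_0(X)$ with Lipschitz interpolation constant $M$. Then for all $i,j\in I$ with $i\neq j$, $$\|m_{x_i,y_i}-m_{x_j,y_j}\|\geq \frac{1}{M},$$ the norm being that of $\mathcal F(X)$ (equivalently of $\mathrm{Lip}_0(X)^*$).
   Context: All spaces are real. $(X,d)$ is a metric space with base point $0$, $\widetilde{X}=\{(x,y)\in X\times X: x\neq y\}$. $\mathrm{Lip}_0(X)$ is the Banach space of Lipschitz $f:X\to\mathbb{R}$ with $f(0)=0$, normed by $\|f\|=\sup_{(x,y)\in\widetilde X}|f(x)-f(y)|/d(x,y)$. For $x\in X$, $\delta_x\in\mathrm{Lip}_0(X)^*$ is $\delta_x(f)=f(x)$; $\mathcal F(X)$ is the closed linear span of $\{\delta_x\}$ in $\mathrm{Lip}_0(X)^*$; for $(x,y)\in\widetilde X$, $m_{x,y}=(\delta_x-\delta_y)/d(x,y)$. For a family $((x_i,y_i))_{i\in I}$ in $\widetilde X$, $T:\mathrm{Lip}_0(X)\to\ell_\infty(I)$, $T(f)=\big((f(x_i)-f(y_i))/d(x_i,y_i)\big)_{i\in I}$; the family is Lipschitz interpolating for $\mathrm{Lip}_0(X)$ if $T$ is surjective, and then its Lipschitz interpolation constant is $M=\inf\{K\geq 1: \forall \alpha\in\ell_\infty(I), \|\alpha\|_\infty\le1,\ \exists f\in\mathrm{Lip}_0(X),\ \|f\|\le K,\ T(f)=\alpha\}$.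 *)

theory Defs
  imports "HOL-Analysis.Analysis"
begin

definition Lip0 :: "'a::metric_space \<Rightarrow> ('a \<Rightarrow> real) set" where
  "Lip0 z = {f. f z = 0 \<and> (\<exists>C. C-lipschitz_on UNIV f)}"

definition lip_norm :: "('a::metric_space \<Rightarrow> real) \<Rightarrow> real" where
  "lip_norm f = Sup {\<bar>f x - f y\<bar> / dist x y | x y. x \<noteq> y}"

definition dual_norm :: "'a::metric_space \<Rightarrow> (('a \<Rightarrow> real) \<Rightarrow> real) \<Rightarrow> real" where
  "dual_norm z \<phi> = Sup {\<bar>\<phi> f\<bar> | f. f \<in> Lip0 z \<and> lip_norm f \<le> 1}"

text \<open>Molecule m_{x,y} = (delta_x - delta_y)/d(x,y) as a functional.\<close>
definition molecule :: "'a::metric_space \<Rightarrow> 'a \<Rightarrow> ('a \<Rightarrow> real) \<Rightarrow> real" where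
  "molecule x y = (\<lambda>f. (f x - f y) / dist x y)"

definition lip_interpolating :: "'a::metric_space \<Rightarrow> 'i set \<Rightarrow> ('i \<Rightarrow> 'a) \<Rightarrow> ('i \<Rightarrow> 'a) \<Rightarrow> bool" where
  "lip_interpolating z I xs ys \<longleftrightarrow>
     (\<forall>i\<in>I. xs i \<noteq> ys i) \<and>
     (\<forall>\<alpha>::'i \<Rightarrow> real. bounded (\<alpha> ` I) \<longrightarrow>
        (\<exists>f\<in>Lip0 z. \<forall>i\<in>I. molecule (xs i) (ys i) f = \<alpha> i))"

definition lip_interp_const :: "'a::metric_space \<Rightarrow> 'i set \<Rightarrow> ('i \<Rightarrow> 'a) \<Rightarrow> ('i \<Rightarrow> 'a) \<Rightarrow> real" where
  "lip_interp_const z I xs ys = Inf {K. K \<ge> 1 \<and>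
     (\<forall>\<alpha>::'i \<Rightarrow> real. (\<forall>i\<in>I. \<bar>\<alpha> i\<bar> \<le> 1) \<longrightarrow>
        (\<exists>f\<in>Lip0 z. lip_norm f \<le> K \<and> (\<forall>i\<in>I. molecule (xs i) (ys i) f = \<alpha> i)))}"

end

theory Submission
  imports Defs
begin

lemma lip_norm_le:
  fixes f :: "'a::metric_space \<Rightarrow> real"
  assumes "C-lipschitz_on UNIV f" and "(a::'a::metric_space) \<noteq> b"
  shows "lip_norm f \<le> C"
  unfolding lip_norm_def
proof (rule cSup_least)
  have "\<bar>f a - f b\<bar> / dist a b \<in> {\<bar>f x - f y\<bar> / dist x y | x y. x \<noteq> y}" using assms(2) by auto
  then show "{\<bar>f x - f y\<bar> / dist x y | x y. x \<noteq> y} \<noteq> {}" by auto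
  fix t assume "t \<in> {\<bar>f x - f y\<bar> / dist x y | x y. x \<noteq> y}"
  then obtain x y where t: "t = \<bar>f x - f y\<bar> / dist x y" "x \<noteq> y" by blast
  have "dist (f x) (f y) \<le> C * dist x y" by (rule lipschitz_onD[OF assms(1)]) auto
  then have "\<bar>f x - f y\<bar> \<le> C * dist x y" by (simp add: dist_real_def)
  moreover have "dist x y > 0" using t(2) by simp
  ultimately show "t \<le> C" unfolding t(1) by (simp add: pos_divide_le_eq)
qed

lemma lip_norm_ge:
  fixes f :: "'a::metric_space \<Rightarrow> real"
  assumes "C-lipschitz_on UNIV f" and "x \<noteq> y"
  shows "\<bar>f x - f y\<bar> / dist x y \<le> lip_norm f"
  unfolding lip_norm_def
proof (rule cSup_upper)
  show "\<bar>f x - f y\<bar> / dist x y \<in> {\<bar>f x - f y\<bar> / dist x y | x y. x \<noteq> y}" using assms(2) by auto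
  show "bdd_above {\<bar>f x - f y\<bar> / dist x y | x y. x \<noteq> y}"
  proof (rule bdd_aboveI[where M=C])
    fix t assume "t \<in> {\<bar>f x - f y\<bar> / dist x y | x y. x \<noteq> y}"
    then obtain x y where t: "t = \<bar>f x - f y\<bar> / dist x y" "x \<noteq> y" by blast
    have "dist (f x) (f y) \<le> C * dist x y" by (rule lipschitz_onD[OF assms(1)]) auto
    then have "\<bar>f x - f y\<bar> \<le> C * dist x y" by (simp add: dist_real_def)
    moreover have "dist x y > 0" using t(2) by simp
    ultimately show "t \<le> C" unfolding t(1) by (simp add: pos_divide_le_eq)
  qed
qed

lemma lip_comb:
  fixes f1 f2 :: "'a::metric_space \<Rightarrow> real"
  assumes "C-lipschitz_on UNIV f1" "C-lipschitz_on UNIV f2" "0 \<le> a"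
  shows "(a*(2*C))-lipschitz_on UNIV (\<lambda>x. a * (f1 x - f2 x))"
proof (rule lipschitz_onI)
  fix x y :: 'a
  have "dist (a * (f1 x - f2 x)) (a * (f1 y - f2 y)) = a * \<bar>(f1 x - f1 y) - (f2 x - f2 y)\<bar>"
  proof -
    have "a * (f1 x - f2 x) - a * (f1 y - f2 y) = a * ((f1 x - f1 y) - (f2 x - f2 y))"
      by (simp add: algebra_simps)
    then show ?thesis using assms(3) by (simp add: dist_real_def abs_mult)
  qed
  also have "\<dots> \<le> a * (\<bar>f1 x - f1 y\<bar> + \<bar>f2 x - f2 y\<bar>)"
    by (rule mult_left_mono) (auto simp: assms)
  also have "\<dots> \<le> a * (C * dist x y + C * dist x y)"
    using lipschitz_onD[OF assms(1), of x y] lipschitz_onD[OF assms(2), of x y]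
    by (intro mult_left_mono add_mono) (auto simp: dist_real_def assms)
  finally show "dist (a * (f1 x - f2 x)) (a * (f1 y - f2 y)) \<le> a*(2*C) * dist x y"
    by (simp add: algebra_simps)
  show "0 \<le> a*(2*C)" using lipschitz_on_nonneg[OF assms(1)] assms(3) by simp
qed

lemma baire_step:
  fixes z :: "'a::metric_space" and I :: "'i set" and xs ys :: "'i \<Rightarrow> 'a"
  assumes interp: "lip_interpolating z I xs ys"
  shows "\<exists>n::nat. \<exists>\<beta> r. r > 0 \<and> (\<forall>\<alpha>. (\<forall>i\<in>I. \<bar>\<alpha> i - \<beta> i\<bar> \<le> r) \<longrightarrow>
           (\<forall>\<epsilon>>0. \<exists>f\<in>Lip0 z. (real n)-lipschitz_on UNIV f \<and>
              (\<forall>i\<in>I. \<bar>\<alpha> i - molecule (xs i) (ys i) f\<bar> \<le> \<epsilon>)))"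
proof (rule ccontr)
  assume "\<not> ?thesis"
  then have H: "\<forall>n \<beta> r. \<exists>\<alpha> \<epsilon>. r > 0 \<longrightarrow> (\<forall>i\<in>I. \<bar>\<alpha> i - \<beta> i\<bar> \<le> r) \<and> \<epsilon> > 0 \<and>
      (\<forall>f\<in>Lip0 z. (real n)-lipschitz_on UNIV f \<longrightarrow>
          (\<exists>i\<in>I. \<bar>\<alpha> i - molecule (xs i) (ys i) f\<bar> > \<epsilon>))"
    by (metis not_le)
  obtain A E where AE: "\<And>n \<beta> r. r > 0 \<Longrightarrow> (\<forall>i\<in>I. \<bar>A n \<beta> r i - \<beta> i\<bar> \<le> r) \<and> E n \<beta> r > 0 \<and>
      (\<forall>f\<in>Lip0 z. (real n)-lipschitz_on UNIV f \<longrightarrow>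
          (\<exists>i\<in>I. \<bar>A n \<beta> r i - molecule (xs i) (ys i) f\<bar> > E n \<beta> r))"
    using H by metis
  define S where "S = rec_nat ((\<lambda>_. 0)::'i\<Rightarrow>real, 1::real)
     (\<lambda>k p. (A k (fst p) (snd p / 2), min (snd p / 2) (E k (fst p) (snd p / 2) / 2)))"
  define b where "b k = fst (S k)" for k
  define r where "r k = snd (S k)" for k
  have b0: "b 0 = (\<lambda>_. 0)" and r0: "r 0 = 1" by (simp_all add: b_def r_def S_def)
  have bS: "b (Suc k) = A k (b k) (r k / 2)" and rS: "r (Suc k) = min (r k / 2) (E k (b k) (r k / 2) / 2)" for k
    by (simp_all add: b_def r_def S_def)
  have rpos: "r k > 0" for k
  proof (induction k)
    case 0 then show ?case by (simp add: r0)
  next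
    case (Suc k)
    then have "E k (b k) (r k / 2) > 0" using AE[of "r k / 2"] by auto
    then show ?case using Suc by (simp add: rS)
  qed
  have stepb: "\<forall>i\<in>I. \<bar>b (Suc k) i - b k i\<bar> \<le> r k / 2" for k
    using AE[of "r k / 2" k "b k"] rpos[of k] by (simp add: bS)
  have rle: "r (Suc k) \<le> r k / 2" for k by (simp add: rS)
  have nest: "\<forall>i\<in>I. \<bar>b m i - b k i\<bar> + r m \<le> r k" if "k \<le> m" for m k
    using that
  proof (induction m rule: dec_induct)
    case base then show ?case by simp
  next
    case (step m)
    show ?case
    proof
      fix i assume i: "i \<in> I"
      have "\<bar>b (Suc m) i - b k i\<bar> \<le> \<bar>b (Suc m) i - b m i\<bar> + \<bar>b m i - b k i\<bar>" by simp
      then show "\<bar>b (Suc m) i - b k i\<bar> + r (Suc m) \<le> r k"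
        using step.IH i stepb[of m] rle[of m] by force
    qed
  qed
  have rgeo: "r k \<le> (1/2)^k" for k
  proof (induction k)
    case 0 then show ?case by (simp add: r0)
  next
    case (Suc k) then show ?case using rle[of k] by simp
  qed
  have conv: "convergent (\<lambda>k. b k i)" if i: "i \<in> I" for i
  proof -
    have "Cauchy (\<lambda>k. b k i)"
    proof (rule CauchyI)
      fix e :: real assume e: "e > 0"
      obtain M where M: "(1/2::real)^M < e/2" using real_arch_pow_inv[of "e/2" "1/2"] e by auto
      show "\<exists>M. \<forall>m\<ge>M. \<forall>n\<ge>M. norm (b m i - b n i) < e"
      proof (intro exI allI impI)
        fix m n assume "M \<le> m" "M \<le> n"
        then have "\<bar>b m i - b M i\<bar> \<le> r M" "\<bar>b n i - b M i\<bar> \<le> r M"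
          using nest[of M m] nest[of M n] rpos[of m] rpos[of n] i by force+
        then show "norm (b m i - b n i) < e" using rgeo[of M] M by simp
      qed
    qed
    then show ?thesis by (simp add: Cauchy_convergent_iff)
  qed
  define \<delta> where "\<delta> i = lim (\<lambda>k. b k i)" for i
  have lims: "(\<lambda>k. b k i) \<longlonglongrightarrow> \<delta> i" if "i \<in> I" for i
    using conv[OF that] by (simp add: \<delta>_def convergent_LIMSEQ_iff)
  have close: "\<bar>\<delta> i - b k i\<bar> \<le> r k" if i: "i \<in> I" for i k
  proof -
    have "(\<lambda>m. \<bar>b m i - b k i\<bar>) \<longlonglongrightarrow> \<bar>\<delta> i - b k i\<bar>"
      by (intro tendsto_intros lims i)
    moreover have "\<forall>m\<ge>k. \<bar>b m i - b k i\<bar> \<le> r k"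
      using nest rpos i by (meson add_le_cancel_left le_add_same_cancel1 less_imp_le order_trans)
    ultimately show ?thesis by (rule Lim_bounded)
  qed
  have "bounded (\<delta> ` I)"
    unfolding bounded_iff
  proof (intro exI ballI)
    fix t assume "t \<in> \<delta> ` I"
    then obtain i where i: "i \<in> I" "t = \<delta> i" by blast
    show "norm t \<le> 1" using close[OF i(1), of 0] i(2) by (simp add: b0 r0)
  qed
  then obtain f where f: "f \<in> Lip0 z" "\<forall>i\<in>I. molecule (xs i) (ys i) f = \<delta> i"
    using interp unfolding lip_interpolating_def by blast
  then obtain C where C: "C-lipschitz_on UNIV f" unfolding Lip0_def by blast
  define n where "n = nat \<lceil>C\<rceil>"
  have "C \<le> real n" unfolding n_def by linarith
  then have fn: "(real n)-lipschitz_on UNIV f" using C lipschitz_on_le by blast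
  obtain i where i: "i \<in> I" and gt: "\<bar>A n (b n) (r n / 2) i - molecule (xs i) (ys i) f\<bar> > E n (b n) (r n / 2)"
    using AE[of "r n / 2" n "b n"] rpos[of n] f(1) fn by auto
  have "\<bar>\<delta> i - b (Suc n) i\<bar> \<le> E n (b n) (r n / 2) / 2"
    using close[OF i, of "Suc n"] rS[of n] by linarith
  moreover have "E n (b n) (r n / 2) > 0" using AE[of "r n / 2" n "b n"] rpos[of n] by auto
  moreover have "molecule (xs i) (ys i) f = \<delta> i" using f(2) i by blast
  moreover have "\<bar>A n (b n) (r n / 2) i - \<delta> i\<bar> = \<bar>\<delta> i - b (Suc n) i\<bar>"
    by (simp add: bS abs_minus_commute)
  ultimately show False using gt by linarith
qed


lemma approx:
  fixes z :: "'a::metric_space" and I :: "'i set" and xs ys :: "'i \<Rightarrow> 'a"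
  assumes interp: "lip_interpolating z I xs ys"
  shows "\<exists>c\<ge>0. \<forall>s>0. \<forall>\<alpha>. (\<forall>i\<in>I. \<bar>\<alpha> i\<bar> \<le> s) \<longrightarrow>
      (\<exists>f\<in>Lip0 z. lipschitz_on (c * s) UNIV f \<and> (\<forall>i\<in>I. \<bar>\<alpha> i - molecule (xs i) (ys i) f\<bar> \<le> s/2))"
proof -
  obtain n :: nat and \<beta> r where r: "r > 0" and
    H: "\<And>\<alpha> \<epsilon>. (\<forall>i\<in>I. \<bar>\<alpha> i - \<beta> i\<bar> \<le> r) \<Longrightarrow> \<epsilon> > 0 \<Longrightarrow>
       \<exists>f\<in>Lip0 z. (real n)-lipschitz_on UNIV f \<and> (\<forall>i\<in>I. \<bar>\<alpha> i - molecule (xs i) (ys i) f\<bar> \<le> \<epsilon>)"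
    using baire_step[OF interp] by blast
  show ?thesis
  proof (intro exI[of _ "real n / r"] conjI allI impI)
    show "0 \<le> real n / r" using r by simp
    fix s :: real and \<alpha> :: "'i \<Rightarrow> real" assume s: "s > 0" and \<alpha>: "\<forall>i\<in>I. \<bar>\<alpha> i\<bar> \<le> s"
    define \<alpha>' where "\<alpha>' i = (r/s) * \<alpha> i" for i
    have a': "\<bar>\<alpha>' i\<bar> \<le> r" if "i \<in> I" for i
    proof -
      have "\<bar>\<alpha>' i\<bar> = (r/s) * \<bar>\<alpha> i\<bar>" using r s by (simp add: \<alpha>'_def abs_mult)
      also have "\<dots> \<le> (r/s) * s" using \<alpha> that r s by (intro mult_left_mono) auto
      finally show ?thesis using s by simp
    qed
    obtain f1 where f1: "f1 \<in> Lip0 z" "(real n)-lipschitz_on UNIV f1"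
        "\<forall>i\<in>I. \<bar>(\<beta> i + \<alpha>' i) - molecule (xs i) (ys i) f1\<bar> \<le> r/2"
      using H[of "\<lambda>i. \<beta> i + \<alpha>' i" "r/2"] a' r by auto
    obtain f2 where f2: "f2 \<in> Lip0 z" "(real n)-lipschitz_on UNIV f2"
        "\<forall>i\<in>I. \<bar>(\<beta> i - \<alpha>' i) - molecule (xs i) (ys i) f2\<bar> \<le> r/2"
      using H[of "\<lambda>i. \<beta> i - \<alpha>' i" "r/2"] a' r by auto
    define g where "g x = (s/(2*r)) * (f1 x - f2 x)" for x
    have glip0: "lipschitz_on (s/(2*r) * (2 * real n)) UNIV g"
      unfolding g_def by (rule lip_comb[OF f1(2) f2(2)]) (use r s in simp)
    have "s/(2*r) * (2 * real n) = real n / r * s" using r by (simp add: field_simps)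
    then have glip: "lipschitz_on (real n / r * s) UNIV g" using glip0 by metis
    have "g \<in> Lip0 z" using f1(1) f2(1) glip unfolding Lip0_def g_def by auto
    moreover have "\<bar>\<alpha> i - molecule (xs i) (ys i) g\<bar> \<le> s/2" if i: "i \<in> I" for i
    proof -
      let ?d = "dist (xs i) (ys i)"
      have mg: "molecule (xs i) (ys i) g = (s/(2*r)) * (molecule (xs i) (ys i) f1 - molecule (xs i) (ys i) f2)"
      proof -
        have "xs i \<noteq> ys i" using interp i unfolding lip_interpolating_def by blast
        then have "?d \<noteq> 0" by simp
        then show ?thesis using r unfolding molecule_def g_def by (simp add: field_simps)
      qed
      have "\<alpha> i = (s/(2*r)) * (2 * \<alpha>' i)" using r s by (simp add: \<alpha>'_def field_simps)
      then have "\<alpha> i - molecule (xs i) (ys i) g = (s/(2*r)) *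
          (((\<beta> i + \<alpha>' i) - molecule (xs i) (ys i) f1) - ((\<beta> i - \<alpha>' i) - molecule (xs i) (ys i) f2))"
        unfolding mg by (simp add: algebra_simps)
      then have "\<bar>\<alpha> i - molecule (xs i) (ys i) g\<bar> = (s/(2*r)) *
          \<bar>((\<beta> i + \<alpha>' i) - molecule (xs i) (ys i) f1) - ((\<beta> i - \<alpha>' i) - molecule (xs i) (ys i) f2)\<bar>"
        using r s by (simp add: abs_mult)
      also have "\<dots> \<le> (s/(2*r)) * (r/2 + r/2)"
      proof (rule mult_left_mono)
        have e1: "\<bar>(\<beta> i + \<alpha>' i) - molecule (xs i) (ys i) f1\<bar> \<le> r/2" using f1(3) i by blast
        have e2: "\<bar>(\<beta> i - \<alpha>' i) - molecule (xs i) (ys i) f2\<bar> \<le> r/2" using f2(3) i by blast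
        show "\<bar>((\<beta> i + \<alpha>' i) - molecule (xs i) (ys i) f1) - ((\<beta> i - \<alpha>' i) - molecule (xs i) (ys i) f2)\<bar> \<le> r/2 + r/2"
          using abs_triangle_ineq4[of "(\<beta> i + \<alpha>' i) - molecule (xs i) (ys i) f1" "(\<beta> i - \<alpha>' i) - molecule (xs i) (ys i) f2"] e1 e2 by linarith
        show "0 \<le> s/(2*r)" using r s by simp
      qed
      also have "\<dots> = s/2" using r by (simp add: field_simps)
      finally show ?thesis .
    qed
    ultimately show "\<exists>f\<in>Lip0 z. lipschitz_on (real n / r * s) UNIV f \<and>
        (\<forall>i\<in>I. \<bar>\<alpha> i - molecule (xs i) (ys i) f\<bar> \<le> s/2)" using glip by blast
  qed
qed


lemma succ_approx:
  fixes z :: "'a::metric_space" and I :: "'i set" and xs ys :: "'i \<Rightarrow> 'a"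
  assumes c: "c \<ge> 0"
    and P: "\<And>t \<alpha>. t > 0 \<Longrightarrow> \<forall>i\<in>I. \<bar>\<alpha> i\<bar> \<le> t \<Longrightarrow>
       \<exists>f\<in>Lip0 z. lipschitz_on (c * t) UNIV f \<and> (\<forall>i\<in>I. \<bar>\<alpha> i - molecule (xs i) (ys i) f\<bar> \<le> t / 2)"
    and \<alpha>: "\<forall>i\<in>I. \<bar>\<alpha> i\<bar> \<le> 1"
  shows "\<exists>f\<in>Lip0 z. lipschitz_on (2 * c) UNIV f \<and> (\<forall>i\<in>I. molecule (xs i) (ys i) f = \<alpha> i)"
proof -
  define F where "F k \<rho> = (SOME f. f \<in> Lip0 z \<and> lipschitz_on (c * (1/2)^k) UNIV f \<and>
      (\<forall>i\<in>I. \<bar>\<rho> i - molecule (xs i) (ys i) f\<bar> \<le> (1/2)^k / 2))" for k \<rho>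
  define \<rho> where "\<rho> = rec_nat \<alpha> (\<lambda>k \<rho>k. (\<lambda>i. \<rho>k i - molecule (xs i) (ys i) (F k \<rho>k)))"
  have \<rho>0: "\<rho> 0 = \<alpha>" by (simp add: \<rho>_def)
  have \<rho>S: "\<rho> (Suc k) = (\<lambda>i. \<rho> k i - molecule (xs i) (ys i) (F k (\<rho> k)))" for k
    by (simp add: \<rho>_def)
  have Fspec: "F k (\<rho> k) \<in> Lip0 z \<and> lipschitz_on (c * (1/2)^k) UNIV (F k (\<rho> k)) \<and>
      (\<forall>i\<in>I. \<bar>\<rho> k i - molecule (xs i) (ys i) (F k (\<rho> k))\<bar> \<le> (1/2)^k / 2)"
    if "\<forall>i\<in>I. \<bar>\<rho> k i\<bar> \<le> (1/2)^k" for k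
  proof -
    let ?Q = "\<lambda>f. f \<in> Lip0 z \<and> lipschitz_on (c * (1/2)^k) UNIV f \<and>
      (\<forall>i\<in>I. \<bar>\<rho> k i - molecule (xs i) (ys i) f\<bar> \<le> (1/2)^k / 2)"
    have "\<exists>f. ?Q f" using P[of "(1/2)^k" "\<rho> k"] that by auto
    then have "?Q (SOME f. ?Q f)" by (rule someI_ex)
    then show ?thesis by (simp add: F_def)
  qed
  have bound: "\<forall>i\<in>I. \<bar>\<rho> k i\<bar> \<le> (1/2)^k" for k
  proof (induction k)
    case 0 then show ?case using \<alpha> by (simp add: \<rho>0)
  next
    case (Suc k)
    then show ?case using Fspec[OF Suc] by (simp add: \<rho>S)
  qed
  define g where "g k = F k (\<rho> k)" for k
  have g: "g k \<in> Lip0 z" "lipschitz_on (c * (1/2)^k) UNIV (g k)"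
     "\<forall>i\<in>I. \<bar>\<rho> k i - molecule (xs i) (ys i) (g k)\<bar> \<le> (1/2)^k / 2" for k
    using Fspec[OF bound[of k]] by (simp_all add: g_def)
  have gz: "g k z = 0" for k using g(1)[of k] by (simp add: Lip0_def)
  have gdiff: "\<bar>g k x - g k y\<bar> \<le> c * dist x y * (1/2)^k" for k x y
    using lipschitz_onD[OF g(2)[of k], of x y] by (simp add: dist_real_def mult_ac)
  have sumgeo: "summable (\<lambda>k. K * (1/2::real)^k)" for K
    by (intro summable_mult summable_geometric) simp
  have sumgeo_val: "(\<Sum>k. K * (1/2::real)^k) = 2 * K" for K
    by (subst suminf_mult) (simp_all add: suminf_geometric)
  have summ: "summable (\<lambda>k. g k x)" for x
    by (rule summable_comparison_test'[OF sumgeo[of "c * dist x z"]])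
       (use gdiff[of _ x z] gz in simp)
  define f where "f x = (\<Sum>k. g k x)" for x
  have fz: "f z = 0" by (simp add: f_def gz)
  have flip: "lipschitz_on (2 * c) UNIV f"
  proof (rule lipschitz_onI)
    show "0 \<le> 2 * c" using c by simp
    fix x y :: 'a
    have sd: "summable (\<lambda>k. \<bar>g k x - g k y\<bar>)"
      by (rule summable_comparison_test'[OF sumgeo[of "c * dist x y"]]) (use gdiff in simp)
    have "dist (f x) (f y) = \<bar>\<Sum>k. g k x - g k y\<bar>"
      by (simp add: f_def dist_real_def suminf_diff[OF summ summ])
    also have "\<dots> \<le> (\<Sum>k. \<bar>g k x - g k y\<bar>)" by (rule summable_rabs[OF sd])
    also have "\<dots> \<le> (\<Sum>k. c * dist x y * (1/2)^k)"
      by (rule suminf_le[OF gdiff sd sumgeo])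
    also have "\<dots> = 2 * c * dist x y" by (simp add: sumgeo_val)
    finally show "dist (f x) (f y) \<le> 2 * c * dist x y" .
  qed
  have "f \<in> Lip0 z" using fz flip unfolding Lip0_def by blast
  moreover have "molecule (xs i) (ys i) f = \<alpha> i" if i: "i \<in> I" for i
  proof -
    let ?a = "\<lambda>k. molecule (xs i) (ys i) (g k)"
    have part: "(\<Sum>k<N. ?a k) = \<alpha> i - \<rho> N i" for N
      by (induction N) (simp_all add: \<rho>0 \<rho>S g_def)
    have "(\<lambda>N. \<rho> N i) \<longlonglongrightarrow> 0"
    proof (rule Lim_null_comparison)
      show "\<forall>\<^sub>F N in sequentially. norm (\<rho> N i) \<le> (1/2)^N" using bound i by simp
      show "(\<lambda>N. (1/2::real)^N) \<longlonglongrightarrow> 0" by (rule LIMSEQ_power_zero) simp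
    qed
    then have "(\<lambda>N. \<alpha> i - \<rho> N i) \<longlonglongrightarrow> \<alpha> i - 0" by (intro tendsto_intros)
    then have s1: "?a sums \<alpha> i" unfolding sums_def part by simp
    have "(\<lambda>k. (g k (xs i) - g k (ys i)) / dist (xs i) (ys i)) sums ((f (xs i) - f (ys i)) / dist (xs i) (ys i))"
      unfolding f_def by (intro sums_divide sums_diff summable_sums summ)
    then have s2: "?a sums molecule (xs i) (ys i) f" by (simp add: molecule_def)
    show ?thesis using sums_unique2[OF s2 s1] .
  qed
  ultimately show ?thesis using flip by blast
qed


theorem proposition3p20:
  fixes z :: "'a::metric_space" and I :: "'i set" and xs ys :: "'i \<Rightarrow> 'a"
  assumes "lip_interpolating z I xs ys"
    and "i \<in> I" and "j \<in> I" and "i \<noteq> j"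
  shows "dual_norm z (\<lambda>f. molecule (xs i) (ys i) f - molecule (xs j) (ys j) f)
           \<ge> 1 / lip_interp_const z I xs ys"
proof -
  have nei: "xs i \<noteq> ys i" and nej: "xs j \<noteq> ys j"
    using assms unfolding lip_interpolating_def by auto
  define SS where "SS = {K. K \<ge> 1 \<and>
     (\<forall>\<alpha>::'i \<Rightarrow> real. (\<forall>i\<in>I. \<bar>\<alpha> i\<bar> \<le> 1) \<longrightarrow>
        (\<exists>f\<in>Lip0 z. lip_norm f \<le> K \<and> (\<forall>i\<in>I. molecule (xs i) (ys i) f = \<alpha> i)))}"
  have M: "lip_interp_const z I xs ys = Inf SS" unfolding lip_interp_const_def SS_def ..
  define dn where "dn = dual_norm z (\<lambda>f. molecule (xs i) (ys i) f - molecule (xs j) (ys j) f)"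
  define D where "D = {\<bar>molecule (xs i) (ys i) f - molecule (xs j) (ys j) f\<bar> | f. f \<in> Lip0 z \<and> lip_norm f \<le> 1}"
  have dnD: "dn = Sup D" unfolding dn_def D_def dual_norm_def ..
  have mol_bound: "\<bar>molecule (xs k) (ys k) f\<bar> \<le> lip_norm f" if fL: "f \<in> Lip0 z" and nk: "xs k \<noteq> ys k" for f k
  proof -
    obtain C where "C-lipschitz_on UNIV f" using fL unfolding Lip0_def by blast
    from lip_norm_ge[OF this nk] show ?thesis by (simp add: molecule_def)
  qed
  have bddD: "bdd_above D"
  proof (rule bdd_aboveI[where M=2])
    fix t assume "t \<in> D"
    then obtain f where f: "t = \<bar>molecule (xs i) (ys i) f - molecule (xs j) (ys j) f\<bar>" "f \<in> Lip0 z" "lip_norm f \<le> 1"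
      unfolding D_def by blast
    have "\<bar>molecule (xs i) (ys i) f\<bar> \<le> 1" "\<bar>molecule (xs j) (ys j) f\<bar> \<le> 1"
      using mol_bound[OF f(2) nei] mol_bound[OF f(2) nej] f(3) by linarith+
    then show "t \<le> 2" using f(1) by linarith
  qed
  have key: "1 / K \<le> dn" if K: "K \<in> SS" for K
  proof -
    have K1: "K \<ge> 1" using K by (simp add: SS_def)
    define \<alpha>0 where "\<alpha>0 k = (if k = i then 1 else if k = j then -1 else (0::real))" for k
    have "\<forall>k\<in>I. \<bar>\<alpha>0 k\<bar> \<le> 1" by (simp add: \<alpha>0_def)
    then obtain f where f: "f \<in> Lip0 z" "lip_norm f \<le> K" "\<forall>k\<in>I. molecule (xs k) (ys k) f = \<alpha>0 k"
      using K unfolding SS_def by blast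
    obtain C where C: "C-lipschitz_on UNIV f" using f(1) unfolding Lip0_def by blast
    define g where "g x = f x / K" for x
    have glip: "lipschitz_on 1 UNIV g"
    proof (rule lipschitz_onI)
      fix x y :: 'a
      show "dist (g x) (g y) \<le> 1 * dist x y"
      proof (cases "x = y")
        case True then show ?thesis by simp
      next
        case False
        have "\<bar>f x - f y\<bar> / dist x y \<le> K" using lip_norm_ge[OF C False] f(2) by linarith
        then have "\<bar>f x - f y\<bar> \<le> K * dist x y" using False by (simp add: pos_divide_le_eq)
        then have "\<bar>f x - f y\<bar> / K \<le> dist x y" using K1 by (simp add: pos_divide_le_eq mult.commute)
        moreover have "dist (g x) (g y) = \<bar>f x - f y\<bar> / K"
          using K1 by (simp add: g_def dist_real_def diff_divide_distrib[symmetric])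
        ultimately show ?thesis by simp
      qed
    qed simp
    have g0: "g \<in> Lip0 z" using f(1) glip unfolding Lip0_def g_def by auto
    have gn: "lip_norm g \<le> 1" by (rule lip_norm_le[OF glip nei])
    have mg: "molecule (xs k) (ys k) g = molecule (xs k) (ys k) f / K" for k
      unfolding molecule_def g_def by (simp add: diff_divide_distrib[symmetric])
    have "\<bar>molecule (xs i) (ys i) g - molecule (xs j) (ys j) g\<bar> = 2 / K"
      using f(3) assms(2,3,4) K1 by (simp add: mg \<alpha>0_def)
    moreover have "\<bar>molecule (xs i) (ys i) g - molecule (xs j) (ys j) g\<bar> \<in> D"
      unfolding D_def using g0 gn by blast
    ultimately have "2 / K \<le> dn" unfolding dnD using cSup_upper[OF _ bddD] by metis
    moreover have "1 / K \<le> 2 / K" using K1 by (simp add: divide_right_mono)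
    ultimately show ?thesis by linarith
  qed
  obtain c where c: "c \<ge> 0" and P: "\<And>t \<alpha>. t > 0 \<Longrightarrow> \<forall>i\<in>I. \<bar>\<alpha> i\<bar> \<le> t \<Longrightarrow>
       \<exists>f\<in>Lip0 z. lipschitz_on (c * t) UNIV f \<and> (\<forall>i\<in>I. \<bar>\<alpha> i - molecule (xs i) (ys i) f\<bar> \<le> t / 2)"
    using approx[OF assms(1)] by blast
  define K0 where "K0 = max 1 (2 * c)"
  have K0S: "K0 \<in> SS"
    unfolding SS_def
  proof (intro CollectI conjI allI impI)
    show "1 \<le> K0" by (simp add: K0_def)
    fix \<alpha> :: "'i \<Rightarrow> real" assume \<alpha>: "\<forall>i\<in>I. \<bar>\<alpha> i\<bar> \<le> 1"
    obtain f where f: "f \<in> Lip0 z" "lipschitz_on (2 * c) UNIV f" "\<forall>i\<in>I. molecule (xs i) (ys i) f = \<alpha> i"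
      using succ_approx[OF c P \<alpha>] by blast
    have "lip_norm f \<le> 2 * c" by (rule lip_norm_le[OF f(2) nei])
    then have "lip_norm f \<le> K0" by (simp add: K0_def)
    then show "\<exists>f\<in>Lip0 z. lip_norm f \<le> K0 \<and> (\<forall>i\<in>I. molecule (xs i) (ys i) f = \<alpha> i)"
      using f by blast
  qed
  have K0pos: "K0 \<ge> 1" by (simp add: K0_def)
  have dnpos: "dn > 0" using key[OF K0S] K0pos
    by (smt (verit) divide_pos_pos)
  have "1 / dn \<le> Inf SS"
  proof (rule cInf_greatest)
    show "SS \<noteq> {}" using K0S by blast
    fix K assume K: "K \<in> SS"
    then have "K \<ge> 1" by (simp add: SS_def)
    with key[OF K] dnpos show "1 / dn \<le> K" by (simp add: field_simps)
  qed
  moreover have "0 < 1 / dn" using dnpos by simp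
  ultimately have pos: "0 < Inf SS" by linarith
  have "1 \<le> Inf SS * dn" using \<open>1 / dn \<le> Inf SS\<close> dnpos by (simp add: divide_le_eq)
  then have "1 / Inf SS \<le> dn" using pos by (simp add: divide_le_eq mult.commute)
  then show ?thesis by (simp add: M dn_def)
qed

end
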